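(* Let $v=(x,y,w,s,z)$, let $\bar\sigma\in(0,\tfrac12)$, $\alpha\in(0,\tfrac{\pi}{2}]$, $\beta\in(0,\tfrac12]$ and $\sigma\in(\bar\sigma,1)$, and let $\mu=z^Ts/p$. Let $\dot v$ be a solution of $F'(v)\dot v=F(v)-\sigma\mu\bar e$, let $\ddot v$ be any vector of the same dimension, and $v(\alpha)=v-\dot v\sin(\alpha)+\ddot v(1-\cos(\alpha))$. Set $D=2F(v)^TF'(v)\dot v$. If $$\phi(v(\alpha))\le\phi(v)-\beta\sin(\alpha)\,D,$$ then $$\phi(v(\alpha))\le\phi(v)\big(1-2\beta(1-\sigma)\sin(\alpha)\big)<\phi(v).$$
   Context: Let $f:\mathbb{R}^n\to\mathbb{R}$, $h:\mathbb{R}^n\to\mathbb{R}^m$, $g:\mathbb{R}^n\to\mathbb{R}^p$ ($m<n$, $p\ge1$) be twice differentiable. Variables $v=(x,y,w,s,z)\in\mathbb{R}^n\times\mathbb{R}^m\times\mathbb{R}^p\times\mathbb{R}^p\times\mathbb{R}^p$. With $\nabla h(x)=[\nabla h_1(x),\dots,\nabla h_m(x)]$, $\nabla g(x)=[\nabla g_1(x),\dots,\nabla g_p(x)]$, let $\nabla_xL(v)=\nabla f(x)+\nabla h(x)y-\nabla g(x)w$ and $\nabla_x^2L(v)$ its Jacobian in $x$. $\mathcal{D}(u)$ is the diagonal matrix with diagonal $u$, $e$ the all-ones vector, $\bar e=(0,0,0,0,e)$. $F(v)=(\nabla_xL(v),h(x),g(x)-s,w-z,\mathcal{D}(z)s)$,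 $\phi(v)=\|F(v)\|_2^2$, and $$F'(v)=\begin{bmatrix}\nabla_x^2L(v)&\nabla h(x)&-\nabla g(x)&0&0\\ \nabla h(x)^T&0&0&0&0\\ \nabla g(x)^T&0&0&-I&0\\ 0&0&I&0&-I\\ 0&0&0&\mathcal{D}(z)&\mathcal{D}(s)\end{bmatrix}.$$ *)

theory Defs
  imports "HOL-Analysis.Analysis"
begin

type_synonym ('n,'m,'p) pdvar =
  "(real^'n) \<times> (real^'m) \<times> (real^'p) \<times> (real^'p) \<times> (real^'p)"

definition grad :: "(real^'n \<Rightarrow> real) \<Rightarrow> real^'n \<Rightarrow> real^'n" where
  "grad f x = (\<chi> i. frechet_derivative f (at x) (axis i 1))"

text \<open>The matrix nabla h(x) = [grad h_1(x), ..., grad h_m(x)] (n x m) is the transpose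
  of the Jacobian of h.\<close>
definition gradM :: "(real^'n \<Rightarrow> real^'m) \<Rightarrow> real^'n \<Rightarrow> real^'m^'n" where
  "gradM h x = transpose (jacobian h (at x))"

definition gradL ::
  "(real^'n \<Rightarrow> real) \<Rightarrow> (real^'n \<Rightarrow> real^'m) \<Rightarrow> (real^'n \<Rightarrow> real^'p)
   \<Rightarrow> real^'n \<Rightarrow> real^'m \<Rightarrow> real^'p \<Rightarrow> real^'n" where
  "gradL f h g x y w = grad f x + gradM h x *v y - gradM g x *v w"

definition hessL ::
  "(real^'n \<Rightarrow> real) \<Rightarrow> (real^'n \<Rightarrow> real^'m) \<Rightarrow> (real^'n \<Rightarrow> real^'p)
   \<Rightarrow> real^'n \<Rightarrow> real^'m \<Rightarrow> real^'p \<Rightarrow> real^'n^'n" where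
  "hessL f h g x y w = jacobian (\<lambda>x'. gradL f h g x' y w) (at x)"

definition diagm :: "real^'p \<Rightarrow> real^'p^'p" where
  "diagm u = (\<chi> i j. if i = j then u $ i else 0)"

definition Fmap ::
  "(real^'n \<Rightarrow> real) \<Rightarrow> (real^'n \<Rightarrow> real^'m) \<Rightarrow> (real^'n \<Rightarrow> real^'p)
   \<Rightarrow> ('n,'m,'p) pdvar \<Rightarrow> ('n,'m,'p) pdvar" where
  "Fmap f h g v = (case v of (x,y,w,s,z) \<Rightarrow>
     (gradL f h g x y w, h x, g x - s, w - z, diagm z *v s))"

definition phi ::
  "(real^'n \<Rightarrow> real) \<Rightarrow> (real^'n \<Rightarrow> real^'m) \<Rightarrow> (real^'n \<Rightarrow> real^'p)
   \<Rightarrow> ('n,'m,'p) pdvar \<Rightarrow> real" where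
  "phi f h g v = (norm (Fmap f h g v))\<^sup>2"

definition Fderiv ::
  "(real^'n \<Rightarrow> real) \<Rightarrow> (real^'n \<Rightarrow> real^'m) \<Rightarrow> (real^'n \<Rightarrow> real^'p)
   \<Rightarrow> ('n,'m,'p) pdvar \<Rightarrow> ('n,'m,'p) pdvar \<Rightarrow> ('n,'m,'p) pdvar" where
  "Fderiv f h g v d = (case v of (x,y,w,s,z) \<Rightarrow> case d of (dx,dy,dw,ds,dz) \<Rightarrow>
     (hessL f h g x y w *v dx + gradM h x *v dy - gradM g x *v dw,
      transpose (gradM h x) *v dx,
      transpose (gradM g x) *v dx - ds,
      dw - dz,
      diagm z *v ds + diagm s *v dz))"

definition ebar :: "('n::finite,'m::finite,'p::finite) pdvar" where
  "ebar = (0, 0, 0, 0, (\<chi> i. 1))"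

definition mu :: "('n::finite,'m::finite,'p::finite) pdvar \<Rightarrow> real" where
  "mu v = (case v of (x,y,w,s,z) \<Rightarrow> (z \<bullet> s) / real CARD('p))"

end

theory Submission
  imports Defs
begin

lemma key:
  fixes v :: "('n::finite,'m::finite,'p::finite) pdvar"
  shows "Fmap f h g v \<bullet> ebar = real CARD('p) * mu v"
    and "real CARD('p) * (mu v)^2 \<le> phi f h g v"
proof -
  obtain x y w s z where v: "v = (x,y,w,s,z)" by (cases v) auto
  define u where "u = diagm z *v s"
  have us: "u \<bullet> (\<chi> i. 1) = z \<bullet> s"
    unfolding u_def diagm_def inner_vec_def matrix_vector_mult_def
    by (simp add: if_distrib[where f="\<lambda>a. a * b" for b] cong: if_cong)
  have n1: "norm (\<chi> i. 1 :: real^'p)^2 = real CARD('p)"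
    by (simp add: power2_norm_eq_inner inner_vec_def)
  have p0: "real CARD('p) > 0" by simp
  show "Fmap f h g v \<bullet> ebar = real CARD('p) * mu v"
    using p0 by (simp add: Fmap_def ebar_def v mu_def u_def[symmetric] us)
  have cs: "(u \<bullet> (\<chi> i. 1))^2 \<le> norm u ^2 * real CARD('p)"
  proof -
    have "\<bar>u \<bullet> (\<chi> i. 1)\<bar> \<le> norm u * norm (\<chi> i. 1 :: real^'p)" by (rule Cauchy_Schwarz_ineq2)
    hence "\<bar>u \<bullet> (\<chi> i. 1)\<bar>^2 \<le> (norm u * norm (\<chi> i. 1 :: real^'p))^2"
      by (rule power_mono) simp
    thus ?thesis using n1 by (simp add: power_mult_distrib)
  qed
  have "norm u ^2 \<le> phi f h g v"
    by (simp add: phi_def Fmap_def v u_def[symmetric] norm_Pair)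
  moreover have "real CARD('p) * (mu v)^2 = (z \<bullet> s)^2 / real CARD('p)"
    using p0 by (simp add: mu_def v power2_eq_square field_simps)
  moreover have "(z \<bullet> s)^2 / real CARD('p) \<le> norm u ^2"
    using cs us p0 by (simp add: divide_le_eq)
  ultimately show "real CARD('p) * (mu v)^2 \<le> phi f h g v" by linarith
qed


theorem lemma2:
  fixes f :: "real^'n \<Rightarrow> real" and h :: "real^'n \<Rightarrow> real^'m" and g :: "real^'n \<Rightarrow> real^'p"
    and v vd vdd :: "('n,'m,'p) pdvar"
    and sigmabar \<alpha> \<beta> \<sigma> :: real
  assumes mn: "CARD('m) < CARD('n)"
    and f2: "\<forall>x. f differentiable (at x) \<and> (\<lambda>x'. grad f x') differentiable (at x)"
    and h2: "\<forall>x. h differentiable (at x) \<and> (\<lambda>x'. jacobian h (at x')) differentiable (at x)"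
    and g2: "\<forall>x. g differentiable (at x) \<and> (\<lambda>x'. jacobian g (at x')) differentiable (at x)"
    and sb: "0 < sigmabar" "sigmabar < 1/2"
    and al: "0 < \<alpha>" "\<alpha> \<le> pi/2"
    and be: "0 < \<beta>" "\<beta> \<le> 1/2"
    and si: "sigmabar < \<sigma>" "\<sigma> < 1"
    and nontriv: "phi f h g v > 0"
    and newton: "Fderiv f h g v vd = Fmap f h g v - (\<sigma> * mu v) *\<^sub>R ebar"
    and armijo: "phi f h g (v - sin \<alpha> *\<^sub>R vd + (1 - cos \<alpha>) *\<^sub>R vdd)
                   \<le> phi f h g v - \<beta> * sin \<alpha> * (2 * (Fmap f h g v \<bullet> Fderiv f h g v vd))"
  shows "phi f h g (v - sin \<alpha> *\<^sub>R vd + (1 - cos \<alpha>) *\<^sub>R vdd)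
           \<le> phi f h g v * (1 - 2 * \<beta> * (1 - \<sigma>) * sin \<alpha>)
         \<and> phi f h g v * (1 - 2 * \<beta> * (1 - \<sigma>) * sin \<alpha>) < phi f h g v"
proof -
  have F: "Fmap f h g v \<bullet> Fderiv f h g v vd = phi f h g v - \<sigma> * (real CARD('p) * (mu v)^2)"
  proof -
    have "Fmap f h g v \<bullet> Fmap f h g v = phi f h g v" by (simp add: phi_def power2_norm_eq_inner)
    thus ?thesis using key(1)[of f h g v] by (simp add: newton inner_diff_right power2_eq_square)
  qed
  have K: "real CARD('p) * (mu v)^2 \<le> phi f h g v" by (rule key(2))
  have sp: "sin \<alpha> > 0" using al by (intro sin_gt_zero) (auto intro: order.strict_trans1[OF _ pi_half_less_two])
  have A: "\<sigma> * (real CARD('p) * (mu v)^2) \<le> \<sigma> * phi f h g v"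
    using K si sb by (intro mult_left_mono) auto
  have B: "\<beta> * sin \<alpha> > 0" using be sp by simp
  have C: "\<beta> * sin \<alpha> * (2 * (\<sigma> * (real CARD('p) * (mu v)^2))) \<le> \<beta> * sin \<alpha> * (2 * (\<sigma> * phi f h g v))"
    by (rule mult_left_mono[OF _ less_imp_le[OF B]]) (use A in simp)
  have D: "0 < \<beta> * sin \<alpha> * (1 - \<sigma>) * phi f h g v" using B si nontriv by simp
  show ?thesis using armijo F C D by (simp add: algebra_simps)
qed

end
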